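(* Let $(V,\le,\preccurlyeq)$ be a mixed lattice vector space equipped with a vector topology $\tau$. The following are equivalent: (a) every neighborhood of zero contains a type 2 mixed-full neighborhood of zero; (b) every neighborhood of zero contains a neighborhood $W$ of zero such that $y\in W$ and $0\le x\preccurlyeq y$ imply $x\in W$; (c) every neighborhood of zero contains a type 1 mixed-full neighborhood of zero; (d) every neighborhood of zero contains a neighborhood $W$ of zero such that $y\in W$ and $0\preccurlyeq x\le y$ imply $x\in W$.
   Context: A mixed lattice vector space $(V,\le,\preccurlyeq)$ is a real vector space $V$ with two partial orderings $\le$ (initial order) and $\preccurlyeq$ (specific order), each making $V$ a partially ordered vector space, with positive cones $V_p=\{x:0\le x\}$, $V_{sp}=\{x:0\preccurlyeq x\}$, such that: (1) for all $x,y$ the elements $x\curlyvee y=\min\{w: w\succcurlyeq x,\ w\ge y\}$ and $x\curlywedge y=\max\{w: w\preccurlyeq x,\ w\le y\}$ exist (min/max with respect to $\le$); (2) $x\preccurlyeq y$ implies $x\le y$; (3) $x\curlyvee y, x\curlywedge y\in V_{sp}$ whenever $x,y\in V_{sp}$. For $A\subseteq V$ let $MF_1(A)=\{y\in V: x\preccurlyeq y\le z \text{ for some } x,z\in A\}$ and $MF_2(A)=\{y\in V: x\le y\preccurlyeq z \text{ for some } x,z\in A\}$. A set $A$ is type 1 mixed-full if $A=MF_1(A)$, and type 2 mixed-full if $A=MF_2(A)$. *)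

theory Defs
  imports "HOL-Analysis.Analysis"
begin

definition ordered_vs :: "('a::real_vector \<Rightarrow> 'a \<Rightarrow> bool) \<Rightarrow> bool" where
  "ordered_vs r \<longleftrightarrow>
     (\<forall>x. r x x) \<and> (\<forall>x y. r x y \<and> r y x \<longrightarrow> x = y) \<and>
     (\<forall>x y z. r x y \<and> r y z \<longrightarrow> r x z) \<and>
     (\<forall>x y z. r x y \<longrightarrow> r (x + z) (y + z)) \<and>
     (\<forall>x y (a::real). r x y \<and> 0 \<le> a \<longrightarrow> r (a *\<^sub>R x) (a *\<^sub>R y))"

definition is_mixed_sup :: "('a \<Rightarrow> 'a \<Rightarrow> bool) \<Rightarrow> ('a \<Rightarrow> 'a \<Rightarrow> bool) \<Rightarrow> 'a \<Rightarrow> 'a \<Rightarrow> 'a \<Rightarrow> bool" where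
  "is_mixed_sup le sle x y m \<longleftrightarrow> sle x m \<and> le y m \<and> (\<forall>w. sle x w \<and> le y w \<longrightarrow> le m w)"

definition is_mixed_inf :: "('a \<Rightarrow> 'a \<Rightarrow> bool) \<Rightarrow> ('a \<Rightarrow> 'a \<Rightarrow> bool) \<Rightarrow> 'a \<Rightarrow> 'a \<Rightarrow> 'a \<Rightarrow> bool" where
  "is_mixed_inf le sle x y m \<longleftrightarrow> sle m x \<and> le m y \<and> (\<forall>w. sle w x \<and> le w y \<longrightarrow> le w m)"

definition mixed_sup :: "('a \<Rightarrow> 'a \<Rightarrow> bool) \<Rightarrow> ('a \<Rightarrow> 'a \<Rightarrow> bool) \<Rightarrow> 'a \<Rightarrow> 'a \<Rightarrow> 'a" where
  "mixed_sup le sle x y = (THE m. is_mixed_sup le sle x y m)"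

definition mixed_inf :: "('a \<Rightarrow> 'a \<Rightarrow> bool) \<Rightarrow> ('a \<Rightarrow> 'a \<Rightarrow> bool) \<Rightarrow> 'a \<Rightarrow> 'a \<Rightarrow> 'a" where
  "mixed_inf le sle x y = (THE m. is_mixed_inf le sle x y m)"

text \<open>Mixed lattice vector space: le is the initial order, sle the specific order.\<close>
definition mixed_lattice_vs :: "('a::real_vector \<Rightarrow> 'a \<Rightarrow> bool) \<Rightarrow> ('a \<Rightarrow> 'a \<Rightarrow> bool) \<Rightarrow> bool" where
  "mixed_lattice_vs le sle \<longleftrightarrow>
     ordered_vs le \<and> ordered_vs sle \<and>
     (\<forall>x y. \<exists>m. is_mixed_sup le sle x y m) \<and>
     (\<forall>x y. \<exists>m. is_mixed_inf le sle x y m) \<and>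
     (\<forall>x y. sle x y \<longrightarrow> le x y) \<and>
     (\<forall>x y. sle 0 x \<and> sle 0 y \<longrightarrow> sle 0 (mixed_sup le sle x y) \<and> sle 0 (mixed_inf le sle x y))"

definition MF1 :: "('a \<Rightarrow> 'a \<Rightarrow> bool) \<Rightarrow> ('a \<Rightarrow> 'a \<Rightarrow> bool) \<Rightarrow> 'a set \<Rightarrow> 'a set" where
  "MF1 le sle A = {y. \<exists>x\<in>A. \<exists>z\<in>A. sle x y \<and> le y z}"

definition MF2 :: "('a \<Rightarrow> 'a \<Rightarrow> bool) \<Rightarrow> ('a \<Rightarrow> 'a \<Rightarrow> bool) \<Rightarrow> 'a set \<Rightarrow> 'a set" where
  "MF2 le sle A = {y. \<exists>x\<in>A. \<exists>z\<in>A. le x y \<and> sle y z}"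

definition vector_topology :: "'a::real_vector topology \<Rightarrow> bool" where
  "vector_topology T \<longleftrightarrow> topspace T = UNIV \<and>
     continuous_map (prod_topology T T) T (\<lambda>(x, y). x + y) \<and>
     continuous_map (prod_topology euclideanreal T) T (\<lambda>(a, x). a *\<^sub>R x)"

definition nhd0 :: "'a::real_vector topology \<Rightarrow> 'a set \<Rightarrow> bool" where
  "nhd0 T N \<longleftrightarrow> (\<exists>U. openin T U \<and> 0 \<in> U \<and> U \<subseteq> N)"

end

theory Submission
  imports Defs
begin

lemma ov_refl: "ordered_vs r \<Longrightarrow> r x x" unfolding ordered_vs_def by blast
lemma ov_trans: "ordered_vs r \<Longrightarrow> r x y \<Longrightarrow> r y z \<Longrightarrow> r x z" unfolding ordered_vs_def by blast
lemma ov_add: "ordered_vs r \<Longrightarrow> r x y \<Longrightarrow> r (x + z) (y + z)" unfolding ordered_vs_def by blast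
lemma tr1: "ordered_vs r \<Longrightarrow> r x y \<Longrightarrow> r 0 (y - x)"
  using ov_add[of r x y "-x"] by simp
lemma tr2: "ordered_vs r \<Longrightarrow> r 0 x \<Longrightarrow> r (y - x) y"
  using ov_add[of r 0 x "y - x"] by simp
lemma tr3: "ordered_vs r \<Longrightarrow> r x y \<Longrightarrow> r (x - w) (y - w)"
  using ov_add[of r x y "-w"] by simp

lemma nhd0_0: "nhd0 T N \<Longrightarrow> 0 \<in> N" unfolding nhd0_def by blast
lemma nhd0_mono: "nhd0 T N \<Longrightarrow> N \<subseteq> M \<Longrightarrow> nhd0 T M" unfolding nhd0_def by blast

lemma nhd0_pair:
  assumes c: "continuous_map (prod_topology T T) T f" and f0: "f (0,0) = 0" and N: "nhd0 T N"
  shows "\<exists>V. nhd0 T V \<and> (\<forall>x\<in>V. \<forall>y\<in>V. f (x,y) \<in> N)"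
proof -
  obtain U where U: "openin T U" "0 \<in> U" "U \<subseteq> N" using N unfolding nhd0_def by blast
  have t0: "0 \<in> topspace T" using U openin_subset by blast
  let ?O = "{p \<in> topspace (prod_topology T T). f p \<in> U}"
  have "openin (prod_topology T T) ?O" using c U(1) openin_continuous_map_preimage by blast
  moreover have "(0,0) \<in> ?O" using t0 f0 U(2) by simp
  ultimately obtain U1 U2 where UU: "openin T U1" "openin T U2" "0 \<in> U1" "0 \<in> U2" "U1 \<times> U2 \<subseteq> ?O"
    unfolding openin_prod_topology_alt by blast
  have "nhd0 T (U1 \<inter> U2)" unfolding nhd0_def using UU by blast
  moreover have "\<forall>x\<in>U1 \<inter> U2. \<forall>y\<in>U1 \<inter> U2. f (x,y) \<in> N" using UU(5) U(3) by blast
  ultimately show ?thesis by blast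
qed

lemma vt_sub:
  assumes "vector_topology T"
  shows "continuous_map (prod_topology T T) T (\<lambda>(x,y). x - y)"
proof -
  have add: "continuous_map (prod_topology T T) T (\<lambda>(x, y). x + y)"
   and sc: "continuous_map (prod_topology euclideanreal T) T (\<lambda>(a, x). a *\<^sub>R x)"
   and tp: "topspace T = UNIV"
    using assms unfolding vector_topology_def by auto
  have c1: "continuous_map (prod_topology T T) (prod_topology euclideanreal T) (\<lambda>p. (-1, snd p))"
    unfolding continuous_map_pairwise o_def by (simp add: continuous_map_snd)
  have c2: "continuous_map (prod_topology T T) T (\<lambda>p. - snd p)"
    using continuous_map_compose[OF c1 sc] by (simp add: o_def)
  have c3: "continuous_map (prod_topology T T) (prod_topology T T) (\<lambda>p. (fst p, - snd p))"
    unfolding continuous_map_pairwise o_def using c2 by (simp add: continuous_map_fst)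
  show ?thesis
    using continuous_map_compose[OF c3 add] by (simp add: o_def case_prod_unfold)
qed

lemma vt_add: "vector_topology T \<Longrightarrow> continuous_map (prod_topology T T) T (\<lambda>(x,y). x + y)"
  unfolding vector_topology_def by auto

lemma subN: "vector_topology T \<Longrightarrow> nhd0 T N \<Longrightarrow> \<exists>V. nhd0 T V \<and> (\<forall>x\<in>V. \<forall>y\<in>V. x - y \<in> N)"
proof -
  assume a: "vector_topology T" "nhd0 T N"
  show ?thesis using nhd0_pair[OF vt_sub[OF a(1)] _ a(2)] by simp
qed
lemma addN: "vector_topology T \<Longrightarrow> nhd0 T N \<Longrightarrow> \<exists>V. nhd0 T V \<and> (\<forall>x\<in>V. \<forall>y\<in>V. x + y \<in> N)"
proof -
  assume a: "vector_topology T" "nhd0 T N"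
  show ?thesis using nhd0_pair[OF vt_add[OF a(1)] _ a(2)] by simp
qed

theorem proposition3p6:
  fixes le sle :: "'a::real_vector \<Rightarrow> 'a \<Rightarrow> bool" and T :: "'a topology"
  assumes "mixed_lattice_vs le sle"
    and "vector_topology T"
  shows "((\<forall>N. nhd0 T N \<longrightarrow> (\<exists>W. nhd0 T W \<and> W \<subseteq> N \<and> MF2 le sle W = W)) \<longleftrightarrow>
          (\<forall>N. nhd0 T N \<longrightarrow> (\<exists>W. nhd0 T W \<and> W \<subseteq> N \<and>
               (\<forall>x y. y \<in> W \<and> le 0 x \<and> sle x y \<longrightarrow> x \<in> W)))) \<and>
         ((\<forall>N. nhd0 T N \<longrightarrow> (\<exists>W. nhd0 T W \<and> W \<subseteq> N \<and>
               (\<forall>x y. y \<in> W \<and> le 0 x \<and> sle x y \<longrightarrow> x \<in> W))) \<longleftrightarrow>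
          (\<forall>N. nhd0 T N \<longrightarrow> (\<exists>W. nhd0 T W \<and> W \<subseteq> N \<and> MF1 le sle W = W))) \<and>
         ((\<forall>N. nhd0 T N \<longrightarrow> (\<exists>W. nhd0 T W \<and> W \<subseteq> N \<and> MF1 le sle W = W)) \<longleftrightarrow>
          (\<forall>N. nhd0 T N \<longrightarrow> (\<exists>W. nhd0 T W \<and> W \<subseteq> N \<and>
               (\<forall>x y. y \<in> W \<and> sle 0 x \<and> le x y \<longrightarrow> x \<in> W))))"
proof -
  have L: "ordered_vs le" and S: "ordered_vs sle" and SL: "\<And>x y. sle x y \<Longrightarrow> le x y"
    using assms(1) unfolding mixed_lattice_vs_def by auto
  note VT = assms(2)
  define A where "A = (\<forall>N. nhd0 T N \<longrightarrow> (\<exists>W. nhd0 T W \<and> W \<subseteq> N \<and> MF2 le sle W = W))"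
  define B where "B = (\<forall>N. nhd0 T N \<longrightarrow> (\<exists>W. nhd0 T W \<and> W \<subseteq> N \<and>
               (\<forall>x y. y \<in> W \<and> le 0 x \<and> sle x y \<longrightarrow> x \<in> W)))"
  define C where "C = (\<forall>N. nhd0 T N \<longrightarrow> (\<exists>W. nhd0 T W \<and> W \<subseteq> N \<and> MF1 le sle W = W))"
  define D where "D = (\<forall>N. nhd0 T N \<longrightarrow> (\<exists>W. nhd0 T W \<and> W \<subseteq> N \<and>
               (\<forall>x y. y \<in> W \<and> sle 0 x \<and> le x y \<longrightarrow> x \<in> W)))"
  have AB: "A \<Longrightarrow> B"
  proof -
    assume A
    show B unfolding B_def
    proof (intro allI impI)
      fix N assume "nhd0 T N"
      then obtain W where W: "nhd0 T W" "W \<subseteq> N" "MF2 le sle W = W" using \<open>A\<close> A_def by blast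
      have "\<forall>x y. y \<in> W \<and> le 0 x \<and> sle x y \<longrightarrow> x \<in> W"
      proof (intro allI impI)
        fix x y assume h: "y \<in> W \<and> le 0 x \<and> sle x y"
        hence "x \<in> MF2 le sle W" unfolding MF2_def using nhd0_0[OF W(1)] by blast
        thus "x \<in> W" using W(3) by simp
      qed
      thus "\<exists>W. nhd0 T W \<and> W \<subseteq> N \<and> (\<forall>x y. y \<in> W \<and> le 0 x \<and> sle x y \<longrightarrow> x \<in> W)"
        using W by blast
    qed
  qed
  have BA: "B \<Longrightarrow> A"
  proof -
    assume B
    show A unfolding A_def
    proof (intro allI impI)
      fix N assume "nhd0 T N"
      then obtain V1 where V1: "nhd0 T V1" "\<forall>x\<in>V1. \<forall>y\<in>V1. x + y \<in> N" using addN[OF VT] by blast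
      obtain W where W: "nhd0 T W" "W \<subseteq> V1" "\<forall>x y. y \<in> W \<and> le 0 x \<and> sle x y \<longrightarrow> x \<in> W"
        using \<open>B\<close> V1(1) B_def by blast
      obtain V where V: "nhd0 T V" "\<forall>x\<in>V. \<forall>y\<in>V. x - y \<in> W" using subN[OF VT W(1)] by blast
      have VW: "V \<subseteq> W" using V nhd0_0[OF V(1)] by force
      have sub: "V \<subseteq> MF2 le sle V" unfolding MF2_def using ov_refl[OF L] ov_refl[OF S] by blast
      have idem: "MF2 le sle (MF2 le sle V) = MF2 le sle V"
      proof
        show "MF2 le sle (MF2 le sle V) \<subseteq> MF2 le sle V"
        proof
          fix y assume "y \<in> MF2 le sle (MF2 le sle V)"
          then obtain x z where xz: "x \<in> MF2 le sle V" "z \<in> MF2 le sle V" "le x y" "sle y z"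
            unfolding MF2_def by blast
          obtain x1 x2 where "x1 \<in> V" "le x1 x" using xz(1) unfolding MF2_def by blast
          moreover obtain z2 where "z2 \<in> V" "sle z z2" using xz(2) unfolding MF2_def by blast
          ultimately show "y \<in> MF2 le sle V" unfolding MF2_def
            using xz ov_trans[OF L] ov_trans[OF S] by blast
        qed
        show "MF2 le sle V \<subseteq> MF2 le sle (MF2 le sle V)"
          unfolding MF2_def using ov_refl[OF L] ov_refl[OF S] by blast
      qed
      have "MF2 le sle V \<subseteq> N"
      proof
        fix y assume "y \<in> MF2 le sle V"
        then obtain x z where xz: "x \<in> V" "z \<in> V" "le x y" "sle y z" unfolding MF2_def by blast
        have "le 0 (y - x)" using tr1[OF L xz(3)] .
        moreover have "sle (y - x) (z - x)" using tr3[OF S xz(4)] .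
        moreover have "z - x \<in> W" using V(2) xz by blast
        ultimately have "y - x \<in> W" using W(3) by blast
        hence "x + (y - x) \<in> N" using V1(2) xz(1) VW W(2) by blast
        thus "y \<in> N" by simp
      qed
      thus "\<exists>W. nhd0 T W \<and> W \<subseteq> N \<and> MF2 le sle W = W"
        using idem nhd0_mono[OF V(1) sub] by blast
    qed
  qed
  have CD: "C \<Longrightarrow> D"
  proof -
    assume C
    show D unfolding D_def
    proof (intro allI impI)
      fix N assume "nhd0 T N"
      then obtain W where W: "nhd0 T W" "W \<subseteq> N" "MF1 le sle W = W" using \<open>C\<close> C_def by blast
      have "\<forall>x y. y \<in> W \<and> sle 0 x \<and> le x y \<longrightarrow> x \<in> W"
      proof (intro allI impI)
        fix x y assume h: "y \<in> W \<and> sle 0 x \<and> le x y"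
        hence "x \<in> MF1 le sle W" unfolding MF1_def using nhd0_0[OF W(1)] by blast
        thus "x \<in> W" using W(3) by simp
      qed
      thus "\<exists>W. nhd0 T W \<and> W \<subseteq> N \<and> (\<forall>x y. y \<in> W \<and> sle 0 x \<and> le x y \<longrightarrow> x \<in> W)"
        using W by blast
    qed
  qed
  have DC: "D \<Longrightarrow> C"
  proof -
    assume D
    show C unfolding C_def
    proof (intro allI impI)
      fix N assume "nhd0 T N"
      then obtain V1 where V1: "nhd0 T V1" "\<forall>x\<in>V1. \<forall>y\<in>V1. x + y \<in> N" using addN[OF VT] by blast
      obtain W where W: "nhd0 T W" "W \<subseteq> V1" "\<forall>x y. y \<in> W \<and> sle 0 x \<and> le x y \<longrightarrow> x \<in> W"
        using \<open>D\<close> V1(1) D_def by blast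
      obtain V where V: "nhd0 T V" "\<forall>x\<in>V. \<forall>y\<in>V. x - y \<in> W" using subN[OF VT W(1)] by blast
      have VW: "V \<subseteq> W" using V nhd0_0[OF V(1)] by force
      have sub: "V \<subseteq> MF1 le sle V" unfolding MF1_def using ov_refl[OF L] ov_refl[OF S] by blast
      have idem: "MF1 le sle (MF1 le sle V) = MF1 le sle V"
      proof
        show "MF1 le sle (MF1 le sle V) \<subseteq> MF1 le sle V"
        proof
          fix y assume "y \<in> MF1 le sle (MF1 le sle V)"
          then obtain x z where xz: "x \<in> MF1 le sle V" "z \<in> MF1 le sle V" "sle x y" "le y z"
            unfolding MF1_def by blast
          obtain x1 where "x1 \<in> V" "sle x1 x" using xz(1) unfolding MF1_def by blast
          moreover obtain z2 where "z2 \<in> V" "le z z2" using xz(2) unfolding MF1_def by blast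
          ultimately show "y \<in> MF1 le sle V" unfolding MF1_def
            using xz ov_trans[OF L] ov_trans[OF S] by blast
        qed
        show "MF1 le sle V \<subseteq> MF1 le sle (MF1 le sle V)"
          unfolding MF1_def using ov_refl[OF L] ov_refl[OF S] by blast
      qed
      have "MF1 le sle V \<subseteq> N"
      proof
        fix y assume "y \<in> MF1 le sle V"
        then obtain x z where xz: "x \<in> V" "z \<in> V" "sle x y" "le y z" unfolding MF1_def by blast
        have "sle 0 (y - x)" using tr1[OF S xz(3)] .
        moreover have "le (y - x) (z - x)" using tr3[OF L xz(4)] .
        moreover have "z - x \<in> W" using V(2) xz by blast
        ultimately have "y - x \<in> W" using W(3) by blast
        hence "x + (y - x) \<in> N" using V1(2) xz(1) VW W(2) by blast
        thus "y \<in> N" by simp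
      qed
      thus "\<exists>W. nhd0 T W \<and> W \<subseteq> N \<and> MF1 le sle W = W"
        using idem nhd0_mono[OF V(1) sub] by blast
    qed
  qed
  have BD: "B \<Longrightarrow> D"
  proof -
    assume B
    show D unfolding D_def
    proof (intro allI impI)
      fix N assume "nhd0 T N"
      then obtain V where V: "nhd0 T V" "\<forall>x\<in>V. \<forall>y\<in>V. x - y \<in> N" using subN[OF VT] by blast
      have VN: "V \<subseteq> N" using V nhd0_0[OF V(1)] by force
      obtain W where W: "nhd0 T W" "W \<subseteq> V" "\<forall>x y. y \<in> W \<and> le 0 x \<and> sle x y \<longrightarrow> x \<in> W"
        using \<open>B\<close> V(1) B_def by blast
      define W' where "W' = W \<union> {x. \<exists>y\<in>W. sle 0 x \<and> le x y}"
      have "W' \<subseteq> N"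
      proof
        fix x assume "x \<in> W'"
        then consider "x \<in> W" | y where "y \<in> W" "sle 0 x" "le x y" unfolding W'_def by blast
        thus "x \<in> N"
        proof cases
          case 1 thus ?thesis using W(2) VN by blast
        next
          case 2
          have "le 0 (y - x)" using tr1[OF L 2(3)] .
          moreover have "sle (y - x) y" using tr2[OF S 2(2)] .
          ultimately have "y - x \<in> W" using W(3) 2(1) by blast
          hence "y - (y - x) \<in> N" using V(2) W(2) 2(1) by blast
          thus ?thesis by simp
        qed
      qed
      moreover have "\<forall>x y. y \<in> W' \<and> sle 0 x \<and> le x y \<longrightarrow> x \<in> W'"
        unfolding W'_def using ov_trans[OF L] by blast
      moreover have "nhd0 T W'" using nhd0_mono[OF W(1)] W'_def by blast
      ultimately show "\<exists>W. nhd0 T W \<and> W \<subseteq> N \<and> (\<forall>x y. y \<in> W \<and> sle 0 x \<and> le x y \<longrightarrow> x \<in> W)"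
        by blast
    qed
  qed
  have DB: "D \<Longrightarrow> B"
  proof -
    assume D
    show B unfolding B_def
    proof (intro allI impI)
      fix N assume "nhd0 T N"
      then obtain V where V: "nhd0 T V" "\<forall>x\<in>V. \<forall>y\<in>V. x - y \<in> N" using subN[OF VT] by blast
      have VN: "V \<subseteq> N" using V nhd0_0[OF V(1)] by force
      obtain W where W: "nhd0 T W" "W \<subseteq> V" "\<forall>x y. y \<in> W \<and> sle 0 x \<and> le x y \<longrightarrow> x \<in> W"
        using \<open>D\<close> V(1) D_def by blast
      define W' where "W' = W \<union> {x. \<exists>y\<in>W. le 0 x \<and> sle x y}"
      have "W' \<subseteq> N"
      proof
        fix x assume "x \<in> W'"
        then consider "x \<in> W" | y where "y \<in> W" "le 0 x" "sle x y" unfolding W'_def by blast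
        thus "x \<in> N"
        proof cases
          case 1 thus ?thesis using W(2) VN by blast
        next
          case 2
          have "sle 0 (y - x)" using tr1[OF S 2(3)] .
          moreover have "le (y - x) y" using tr2[OF L 2(2)] .
          ultimately have "y - x \<in> W" using W(3) 2(1) by blast
          hence "y - (y - x) \<in> N" using V(2) W(2) 2(1) by blast
          thus ?thesis by simp
        qed
      qed
      moreover have "\<forall>x y. y \<in> W' \<and> le 0 x \<and> sle x y \<longrightarrow> x \<in> W'"
        unfolding W'_def using ov_trans[OF S] by blast
      moreover have "nhd0 T W'" using nhd0_mono[OF W(1)] W'_def by blast
      ultimately show "\<exists>W. nhd0 T W \<and> W \<subseteq> N \<and> (\<forall>x y. y \<in> W \<and> le 0 x \<and> sle x y \<longrightarrow> x \<in> W)"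
        by blast
    qed
  qed
  have "(A \<longleftrightarrow> B) \<and> (B \<longleftrightarrow> C) \<and> (C \<longleftrightarrow> D)" using AB BA BD DB CD DC by blast
  thus ?thesis unfolding A_def B_def C_def D_def .
qed

end
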